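(* Let $P$ be a finite poset with a unit OC interval representation $\{I_x : x\in P\}$ (each $I_x$ of length $1$, open or closed). Let $Q$ be the poset on the same ground set in which, for distinct $x,y$, $x<y$ in $Q$ if and only if the open interval $\operatorname{int}(I_x)$ lies entirely to the left of $\operatorname{int}(I_y)$ (i.e. the right endpoint of $I_x$ is at most the left endpoint of $I_y$). Partition $Q$ into antichains $A_1,\dots,A_t$ by letting $A_1$ be the set of minimal elements of $Q$, $A_2$ the set of minimal elements of $Q$ with $A_1$ removed, and so on. Then for all $i$ and all $j \ge i+2$, every $a \in A_i$ and $b \in A_j$ satisfy $a < b$ in $P$. Consequently, any two incomparable elements of $P$ lie in the same antichain $A_i$ or in consecutive antichains $A_i, A_{i+1}$.
   Context: Posets are finite and reflexive. A unit OC interval representation of a poset $P$ assigns to each element $x$ a real interval $I_x$ of length $1$ which is either open $(a,a+1)$ or closed $[a,a+1]$, such that for distinct $x,y$, $x<y$ in $P$ if and only if $I_x$ and $I_y$ are disjoint and every point of $I_x$ is less than every point of $I_y$. *)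

theory Defs
  imports Complex_Main
begin

definition unit_interval :: "real \<Rightarrow> bool \<Rightarrow> real set" where
  "unit_interval l is_closed = (if is_closed then {l..l+1} else {l<..<l+1})"

definition interval_before :: "real set \<Rightarrow> real set \<Rightarrow> bool" where
  "interval_before I J \<longleftrightarrow> I \<inter> J = {} \<and> (\<forall>p\<in>I. \<forall>q\<in>J. p < q)"

definition poset_on :: "'a set \<Rightarrow> ('a \<Rightarrow> 'a \<Rightarrow> bool) \<Rightarrow> bool" where
  "poset_on X le \<longleftrightarrow> finite X \<and> (\<forall>x\<in>X. le x x)
     \<and> (\<forall>x\<in>X. \<forall>y\<in>X. le x y \<and> le y x \<longrightarrow> x = y)
     \<and> (\<forall>x\<in>X. \<forall>y\<in>X. \<forall>z\<in>X. le x y \<and> le y z \<longrightarrow> le x z)"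

definition unit_OC_rep :: "'a set \<Rightarrow> ('a \<Rightarrow> 'a \<Rightarrow> bool) \<Rightarrow> ('a \<Rightarrow> real) \<Rightarrow> ('a \<Rightarrow> bool) \<Rightarrow> bool" where
  "unit_OC_rep X le l c \<longleftrightarrow> (\<forall>x\<in>X. \<forall>y\<in>X. x \<noteq> y \<longrightarrow>
     ((le x y \<and> x \<noteq> y) \<longleftrightarrow> interval_before (unit_interval (l x) (c x)) (unit_interval (l y) (c y))))"

definition Q_less :: "('a \<Rightarrow> real) \<Rightarrow> 'a \<Rightarrow> 'a \<Rightarrow> bool" where
  "Q_less l x y \<longleftrightarrow> x \<noteq> y \<and> l x + 1 \<le> l y"

definition Q_minimal :: "('a \<Rightarrow> real) \<Rightarrow> 'a set \<Rightarrow> 'a set" where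
  "Q_minimal l S = {x \<in> S. \<not> (\<exists>y\<in>S. Q_less l y x)}"

fun Q_rest :: "'a set \<Rightarrow> ('a \<Rightarrow> real) \<Rightarrow> nat \<Rightarrow> 'a set" where
  "Q_rest X l 0 = X"
| "Q_rest X l (Suc k) = Q_rest X l k - Q_minimal l (Q_rest X l k)"

text \<open>Antichain layer k (0-indexed: Q_layer X l k is the paper's A_(k+1)).\<close>
definition Q_layer :: "'a set \<Rightarrow> ('a \<Rightarrow> real) \<Rightarrow> nat \<Rightarrow> 'a set" where
  "Q_layer X l k = Q_minimal l (Q_rest X l k)"

end

theory Submission
  imports Defs
begin

lemma ui_sub: "unit_interval a c \<subseteq> {a..a+1}"
  by (auto simp: unit_interval_def)

lemma before_of_gap:
  assumes "la + 1 < lb"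
  shows "interval_before (unit_interval la ca) (unit_interval lb cb)"
proof -
  have "\<forall>p\<in>unit_interval la ca. \<forall>q\<in>unit_interval lb cb. p < q"
    using ui_sub[of la ca] ui_sub[of lb cb] assms by fastforce
  then show ?thesis unfolding interval_before_def by fastforce
qed

lemma rest_sub: "Q_rest X l k \<subseteq> X"
  by (induction k) auto

lemma rest_mono: "k \<le> m \<Longrightarrow> Q_rest X l m \<subseteq> Q_rest X l k"
proof (induction m rule: dec_induct)
  case base then show ?case by simp
next
  case (step n) then show ?case by auto
qed

lemma layer_sub: "Q_layer X l k \<subseteq> Q_rest X l k"
  by (auto simp: Q_layer_def Q_minimal_def)

lemma not_min_pred:
  assumes "y \<in> Q_rest X l (Suc k)"
  shows "\<exists>z\<in>Q_rest X l k. Q_less l z y"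
  using assms by (auto simp: Q_minimal_def)

lemma key:
  assumes a: "a \<in> Q_layer X l i" and b: "b \<in> Q_layer X l j" and ij: "i + 2 \<le> j"
  shows "l a + 1 < l b"
proof -
  obtain j' where j': "j = Suc j'" using ij by (cases j) auto
  have "b \<in> Q_rest X l j" using subsetD[OF layer_sub b] .
  then have "b \<in> Q_rest X l (Suc j')" using j' by (simp del: Q_rest.simps)
  from not_min_pred[OF this] obtain y where y: "y \<in> Q_rest X l j'" "Q_less l y b" by blast
  have "Q_rest X l j' \<subseteq> Q_rest X l (Suc i)" using ij j' by (intro rest_mono) auto
  then have "y \<in> Q_rest X l (Suc i)" using y by blast
  from not_min_pred[OF this] obtain z where z: "z \<in> Q_rest X l i" "Q_less l z y" by blast
  have "a \<in> Q_minimal l (Q_rest X l i)" using a unfolding Q_layer_def .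
  then have "\<forall>y\<in>Q_rest X l i. \<not> Q_less l y a" unfolding Q_minimal_def by blast
  then have "\<not> Q_less l z a" using z(1) by blast
  then have "l a < l z + 1" unfolding Q_less_def by auto
  moreover have "l z + 1 \<le> l y" "l y + 1 \<le> l b" using y(2) z(2) unfolding Q_less_def by auto
  ultimately show ?thesis by linarith
qed

lemma min_ne:
  assumes "finite S" "S \<noteq> {}"
  shows "Q_minimal l S \<noteq> {}"
proof -
  define m where "m = Min (l ` S)"
  have "m \<in> l ` S" unfolding m_def using assms by simp
  then obtain x where x: "x \<in> S" "l x = m" by blast
  have le: "\<forall>y\<in>S. l x \<le> l y" using x assms unfolding m_def by simp
  have "x \<in> Q_minimal l S"
    unfolding Q_minimal_def Q_less_def using x(1) le by fastforce
  then show ?thesis by blast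
qed

lemma in_some_layer:
  assumes fin: "finite X" and x: "x \<in> X"
  shows "\<exists>k. x \<in> Q_layer X l k"
proof (rule ccontr)
  assume H: "\<not> ?thesis"
  have inr: "x \<in> Q_rest X l k" for k
  proof (induction k)
    case 0 then show ?case using x by simp
  next
    case (Suc k) then show ?case using H by (auto simp: Q_layer_def)
  qed
  have "card (Q_rest X l k) + k \<le> card X" for k
  proof (induction k)
    case 0 then show ?case by simp
  next
    case (Suc k)
    have f: "finite (Q_rest X l k)" using finite_subset[OF rest_sub fin] .
    have ne: "Q_minimal l (Q_rest X l k) \<noteq> {}" using min_ne[OF f] inr[of k] by auto
    have sub: "Q_minimal l (Q_rest X l k) \<subseteq> Q_rest X l k" by (auto simp: Q_minimal_def)
    have "card (Q_rest X l (Suc k)) < card (Q_rest X l k)"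
    proof -
      have "Q_rest X l k - Q_minimal l (Q_rest X l k) \<subset> Q_rest X l k" using ne sub by blast
      then show ?thesis unfolding Q_rest.simps using f by (rule psubset_card_mono[rotated])
    qed
    then show ?case using Suc by simp
  qed
  from this[of "Suc (card X)"] show False by simp
qed

theorem mainTheorem3:
  fixes X :: "'a set" and le :: "'a \<Rightarrow> 'a \<Rightarrow> bool"
    and l :: "'a \<Rightarrow> real" and c :: "'a \<Rightarrow> bool"
  assumes "poset_on X le"
    and "unit_OC_rep X le l c"
  shows "(\<forall>i j. i + 2 \<le> j \<longrightarrow>
            (\<forall>a\<in>Q_layer X l i. \<forall>b\<in>Q_layer X l j. le a b \<and> a \<noteq> b))
       \<and> (\<forall>x\<in>X. \<forall>y\<in>X. \<not> le x y \<and> \<not> le y x \<longrightarrow>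
            (\<exists>i. (x \<in> Q_layer X l i \<and> y \<in> Q_layer X l i)
               \<or> (x \<in> Q_layer X l i \<and> y \<in> Q_layer X l (Suc i))
               \<or> (y \<in> Q_layer X l i \<and> x \<in> Q_layer X l (Suc i))))"
proof -
  have P1: "le a b \<and> a \<noteq> b" if "i + 2 \<le> j" "a \<in> Q_layer X l i" "b \<in> Q_layer X l j" for i j a b
  proof -
    have g: "l a + 1 < l b" using key[OF that(2,3,1)] .
    have ne: "a \<noteq> b" using g by auto
    have X: "a \<in> X" "b \<in> X" using subsetD[OF rest_sub subsetD[OF layer_sub that(2)]]
      subsetD[OF rest_sub subsetD[OF layer_sub that(3)]] by auto
    have "interval_before (unit_interval (l a) (c a)) (unit_interval (l b) (c b))"
      using before_of_gap g by blast
    then show ?thesis using assms(2) X ne unfolding unit_OC_rep_def by auto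
  qed
  moreover have "\<exists>i. (x \<in> Q_layer X l i \<and> y \<in> Q_layer X l i)
               \<or> (x \<in> Q_layer X l i \<and> y \<in> Q_layer X l (Suc i))
               \<or> (y \<in> Q_layer X l i \<and> x \<in> Q_layer X l (Suc i))"
    if xy: "x \<in> X" "y \<in> X" "\<not> le x y" "\<not> le y x" for x y
  proof -
    have fin: "finite X" using assms(1) by (simp add: poset_on_def)
    obtain i where i: "x \<in> Q_layer X l i" using in_some_layer[OF fin xy(1)] by blast
    obtain j where j: "y \<in> Q_layer X l j" using in_some_layer[OF fin xy(2)] by blast
    have "\<not> i + 2 \<le> j" using P1[OF _ i j] xy(3) by auto
    moreover have "\<not> j + 2 \<le> i" using P1[OF _ j i] xy(4) by auto
    ultimately have "i = j \<or> j = Suc i \<or> i = Suc j" by arith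
    then show ?thesis using i j by blast
  qed
  ultimately show ?thesis by blast
qed

end
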